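(* Under the hypotheses of the previous lemma, assume additionally that $\boldsymbol{\Sigma}_k$ is positive semidefinite. Then for all $\boldsymbol{w}=(\boldsymbol{x},\boldsymbol{\lambda})\in\Omega$, $$f(\boldsymbol{x})-f(\tilde{\boldsymbol{x}}^k)+(\boldsymbol{w}-\tilde{\boldsymbol{w}}^k)^T\boldsymbol{\Gamma}(\boldsymbol{w})+\frac1{2\gamma}\Big(\|\boldsymbol{w}-\boldsymbol{w}^k\|_{\boldsymbol{\Sigma}_k}^2-\|\boldsymbol{w}-\boldsymbol{w}^{k+1}\|_{\boldsymbol{\Sigma}_k}^2\Big)\ge 0.$$
   Context: Setting: $\mathcal{X}\subset\mathbb{R}^n$ nonempty closed convex; $f$ convex; $\phi_i$ convex, continuously differentiable; $\Phi=(\phi_1,\dots,\phi_m)^T$, Jacobian $\mathcal{D}\Phi$; $\Omega=\mathcal{X}\times\mathbb{R}^m_+$; $\boldsymbol{\Gamma}(\boldsymbol{w})=(\mathcal{D}\Phi(\boldsymbol{x})^T\boldsymbol{\lambda},-\Phi(\boldsymbol{x}))$. Hypotheses of the previous lemma: $\gamma\in(0,2)$, $r_k,s_k>0$, $\tilde{\boldsymbol{w}}^k\in\Omega$ satisfies $f(\boldsymbol{x})-f(\tilde{\boldsymbol{x}}^k)+(\boldsymbol{w}-\tilde{\boldsymbol{w}}^k)^T\{\boldsymbol{\Gamma}(\tilde{\boldsymbol{w}}^k)+\boldsymbol{\Sigma}_k(\tilde{\boldsymbol{w}}^k-\boldsymbol{w}^k)\}\ge0$ for all $\boldsymbol{w}\in\Omega$,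 $\boldsymbol{w}^{k+1}=\boldsymbol{w}^k-\gamma(\boldsymbol{w}^k-\tilde{\boldsymbol{w}}^k)$, where $\boldsymbol{\Sigma}_k=\begin{pmatrix} r_k\boldsymbol{I}_n & -\mathcal{D}\Phi(\tilde{\boldsymbol{x}}^k)^T\\ -\mathcal{D}\Phi(\tilde{\boldsymbol{x}}^k) & s_k\boldsymbol{I}_m\end{pmatrix}$; $\|\boldsymbol{v}\|_{\boldsymbol{H}}^2=\boldsymbol{v}^T\boldsymbol{H}\boldsymbol{v}$. *)

theory Defs
  imports "HOL-Analysis.Analysis"
begin

text \<open>Points w = (x, lambda) of R^n x R^m are pairs; the inner product on pairs is the
  standard one (sum of the componentwise inner products).\<close>

definition Omega :: "(real^'n) set \<Rightarrow> ((real^'n) \<times> (real^'m)) set" where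
  "Omega X = X \<times> {l. \<forall>i. 0 \<le> l $ i}"

definition Gamma :: "(real^'n \<Rightarrow> real^'m) \<Rightarrow> (real^'n \<Rightarrow> real^'n^'m)
     \<Rightarrow> (real^'n) \<times> (real^'m) \<Rightarrow> (real^'n) \<times> (real^'m)" where
  "Gamma Phi DPhi w = (transpose (DPhi (fst w)) *v snd w, - Phi (fst w))"

text \<open>The block matrix Sigma = [[r I_n, -A^T], [-A, s I_m]] acting on a pair.\<close>
definition Sigma :: "real \<Rightarrow> real \<Rightarrow> real^'n^'m
     \<Rightarrow> (real^'n) \<times> (real^'m) \<Rightarrow> (real^'n) \<times> (real^'m)" where
  "Sigma r s A v = (r *\<^sub>R fst v - transpose A *v snd v, - (A *v fst v) + s *\<^sub>R snd v)"

definition Hnorm2 :: "('a::real_inner \<Rightarrow> 'a) \<Rightarrow> 'a \<Rightarrow> real" where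
  "Hnorm2 H v = v \<bullet> H v"

definition psd :: "('a::real_inner \<Rightarrow> 'a) \<Rightarrow> bool" where
  "psd H \<longleftrightarrow> (\<forall>v. 0 \<le> v \<bullet> H v)"

end

theory Submission
  imports Defs
begin


lemma tr_inner: "(transpose A *v (l::real^'m)) \<bullet> (x::real^'n) = l \<bullet> (A *v x)"
  by (metis dot_lmul_matrix transpose_transpose vector_transpose_matrix)

lemma grad_ineq:
  fixes g :: "real^'n \<Rightarrow> real"
  assumes cv: "convex_on UNIV g" and d: "(g has_derivative g') (at x)"
  shows "g y - g x \<ge> g' (y - x)"
proof -
  define h where "h t = g (x + t *\<^sub>R (y - x))" for t :: real
  have cvh: "convex_on UNIV h"
  proof (rule convex_onI)
    fix t t1 t2 :: real assume "t > 0" "t < 1"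
    have "x + ((1 - t) *\<^sub>R t1 + t *\<^sub>R t2) *\<^sub>R (y - x) = (1 - t) *\<^sub>R (x + t1 *\<^sub>R (y - x)) + t *\<^sub>R (x + t2 *\<^sub>R (y - x))"
      by (simp add: algebra_simps)
    then show "h ((1 - t) *\<^sub>R t1 + t *\<^sub>R t2) \<le> (1 - t) * h t1 + t * h t2"
      unfolding h_def using convex_onD[OF cv, of t] \<open>t > 0\<close> \<open>t < 1\<close> by auto
  qed simp
  have bl: "bounded_linear g'" using d by (rule has_derivative_bounded_linear)
  have "((\<lambda>t. x + t *\<^sub>R (y - x)) has_derivative (\<lambda>t. t *\<^sub>R (y - x))) (at 0)"
    by (auto intro!: derivative_eq_intros)
  from has_derivative_compose[OF this, of g g'] d
  have "(h has_derivative (\<lambda>t. g' (t *\<^sub>R (y - x)))) (at 0)"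
    unfolding h_def by (simp add: o_def)
  then have "(h has_derivative (\<lambda>t. g' (y - x) * t)) (at 0)"
    using linear_scale[OF bounded_linear.linear[OF bl]] by (simp add: mult.commute[of "g' (y - x)"])
  then have "(h has_field_derivative g' (y - x)) (at 0 within UNIV)"
    unfolding has_field_derivative_def by (metis (no_types) ext)
  from convex_on_imp_above_tangent[OF cvh _ _ _ this, of 1]
  show ?thesis by (simp add: h_def)
qed
lemma Sig_add: "Sigma r s A (u + v) = Sigma r s A u + Sigma r s A v"
  by (simp add: Sigma_def matrix_vector_right_distrib algebra_simps)
lemma Sig_scale: "Sigma r s A (c *\<^sub>R u) = c *\<^sub>R Sigma r s A u"
  by (simp add: Sigma_def matrix_vector_mult_scaleR algebra_simps)
lemma Sig_sym: "u \<bullet> Sigma r s A v = v \<bullet> Sigma r s A u"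
  by (cases u; cases v) (simp add: Sigma_def inner_Pair algebra_simps,
   metis dot_lmul_matrix inner_commute add.commute)
lemma Hexp: "Hnorm2 (Sigma r s A) (a + c *\<^sub>R d) = Hnorm2 (Sigma r s A) a + 2 * c * (a \<bullet> Sigma r s A d) + c^2 * Hnorm2 (Sigma r s A) d"
  using Sig_sym[of d r s A a]
  by (simp add: Hnorm2_def Sig_add Sig_scale inner_add_left inner_add_right power2_eq_square algebra_simps)
lemma vlm: "(x::real^'n) \<bullet> ((l::real^'m) v* A) = l \<bullet> (A *v x)"
  by (metis dot_lmul_matrix inner_commute)

lemma vec_grad:
  fixes Phi :: "real^'n \<Rightarrow> real^'m"
  assumes cv: "\<And>i. convex_on UNIV (\<lambda>x. Phi x $ i)"
    and d: "\<And>x. (Phi has_derivative (\<lambda>h. DPhi x *v h)) (at x)"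
    and l: "\<forall>i. 0 \<le> l $ i"
  shows "0 \<le> l \<bullet> (Phi y - Phi x - DPhi x *v (y - x))"
proof -
  have "\<And>i. 0 \<le> (Phi y - Phi x - DPhi x *v (y - x)) $ i"
    using grad_ineq[OF cv bounded_linear.has_derivative[OF bounded_linear_vec_nth d[of x]], where y=y] by simp
  then show ?thesis using l unfolding inner_vec_def by (auto intro!: sum_nonneg)
qed

lemma mono_Gamma:
  fixes Phi :: "real^'n \<Rightarrow> real^'m"
  assumes cv: "\<And>i. convex_on UNIV (\<lambda>x. Phi x $ i)"
    and d: "\<And>x. (Phi has_derivative (\<lambda>h. DPhi x *v h)) (at x)"
    and l: "\<forall>i. 0 \<le> snd w $ i" and lt: "\<forall>i. 0 \<le> snd wt $ i"
  shows "(w - wt) \<bullet> Gamma Phi DPhi wt \<le> (w - wt) \<bullet> Gamma Phi DPhi w"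
proof -
  obtain x l where w: "w = (x, l)" by (cases w)
  obtain xt lt where wt: "wt = (xt, lt)" by (cases wt)
  have e1: "0 \<le> l \<bullet> (Phi xt - Phi x - DPhi x *v (xt - x))" using vec_grad[OF cv d] l w by simp
  have e2: "0 \<le> lt \<bullet> (Phi x - Phi xt - DPhi xt *v (x - xt))" using vec_grad[OF cv d] lt wt by simp
  have eq: "(w - wt) \<bullet> Gamma Phi DPhi w - (w - wt) \<bullet> Gamma Phi DPhi wt
     = l \<bullet> (Phi xt - Phi x - DPhi x *v (xt - x)) + lt \<bullet> (Phi x - Phi xt - DPhi xt *v (x - xt))"
  proof -
    have a: "DPhi x *v (xt - x) = - (DPhi x *v (x - xt))"
      by (metis matrix_vector_mult_diff_distrib minus_diff_eq)
    show ?thesis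
      unfolding w wt Gamma_def
      by (simp add: inner_Pair tr_inner vlm a inner_diff_left inner_diff_right inner_commute algebra_simps)
  qed
  show ?thesis using e1 e2 eq by linarith
qed

theorem mainTheorem5:
  fixes X :: "(real^'n) set"
    and f :: "real^'n \<Rightarrow> real"
    and Phi :: "real^'n \<Rightarrow> real^'m"
    and DPhi :: "real^'n \<Rightarrow> real^'n^'m"
    and \<gamma> r s :: real
    and wk wt wk1 :: "(real^'n) \<times> (real^'m)"
  assumes X_ne: "X \<noteq> {}" and X_closed: "closed X" and X_convex: "convex X"
    and f_convex: "convex_on UNIV f"
    and Phi_convex: "\<And>i. convex_on UNIV (\<lambda>x. Phi x $ i)"
    and Phi_deriv: "\<And>x. (Phi has_derivative (\<lambda>h. DPhi x *v h)) (at x)"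
    and DPhi_cont: "continuous_on UNIV DPhi"
    and gamma: "0 < \<gamma>" "\<gamma> < 2"
    and rs: "0 < r" "0 < s"
    and wt_in: "wt \<in> Omega X"
    and VI: "\<And>w. w \<in> Omega X \<Longrightarrow>
        0 \<le> f (fst w) - f (fst wt)
           + (w - wt) \<bullet> (Gamma Phi DPhi wt + Sigma r s (DPhi (fst wt)) (wt - wk))"
    and update: "wk1 = wk - \<gamma> *\<^sub>R (wk - wt)"
    and Sigma_psd: "psd (Sigma r s (DPhi (fst wt)))"
  shows "\<forall>w \<in> Omega X.
     0 \<le> f (fst w) - f (fst wt) + (w - wt) \<bullet> Gamma Phi DPhi w
        + (1 / (2 * \<gamma>)) * (Hnorm2 (Sigma r s (DPhi (fst wt))) (w - wk)
                            - Hnorm2 (Sigma r s (DPhi (fst wt))) (w - wk1))"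
proof
  fix w :: "(real^'n) \<times> (real^'m)" assume win: "w \<in> Omega X"
  let ?S = "Sigma r s (DPhi (fst wt))"
  define a where "a = w - wk"
  define d where "d = wk - wt"
  have l1: "\<forall>i. 0 \<le> snd w $ i" using win by (auto simp: Omega_def)
  have l2: "\<forall>i. 0 \<le> snd wt $ i" using wt_in by (auto simp: Omega_def)
  have m: "(w - wt) \<bullet> Gamma Phi DPhi wt \<le> (w - wt) \<bullet> Gamma Phi DPhi w"
    by (rule mono_Gamma[OF Phi_convex Phi_deriv l1 l2])
  have ww: "w - wt = a + d" and wk1: "w - wk1 = a + \<gamma> *\<^sub>R d" and wd: "wt - wk = (-1) *\<^sub>R d"
    by (auto simp: a_def d_def update algebra_simps)
  have vi: "0 \<le> f (fst w) - f (fst wt) + (w - wt) \<bullet> Gamma Phi DPhi wt + (w - wt) \<bullet> ?S (wt - wk)"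
    using VI[OF win] by (simp add: inner_add_right)
  have "(w - wt) \<bullet> ?S (wt - wk) = - (a \<bullet> ?S d) - Hnorm2 ?S d"
    unfolding ww wd Sig_scale by (simp add: Hnorm2_def inner_add_left)
  moreover have e2: "Hnorm2 ?S (w - wk) - Hnorm2 ?S (w - wk1) = - 2 * \<gamma> * (a \<bullet> ?S d) - \<gamma>^2 * Hnorm2 ?S d"
    unfolding wk1 Hexp by (simp add: a_def)
  moreover have hn: "0 \<le> Hnorm2 ?S d" using Sigma_psd unfolding psd_def Hnorm2_def by blast
  moreover have "(1 / (2 * \<gamma>)) * (- 2 * \<gamma> * (a \<bullet> ?S d) - \<gamma>^2 * Hnorm2 ?S d)
      = - (a \<bullet> ?S d) - (\<gamma> / 2) * Hnorm2 ?S d"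
    using gamma by (simp add: field_simps power2_eq_square)
  moreover have "(\<gamma> / 2) * Hnorm2 ?S d \<le> 1 * Hnorm2 ?S d"
    by (rule mult_right_mono) (use gamma hn in auto)
  ultimately have "(w - wt) \<bullet> ?S (wt - wk) \<le> (1 / (2 * \<gamma>)) * (Hnorm2 ?S (w - wk) - Hnorm2 ?S (w - wk1))"
    unfolding e2 by linarith
  then show "0 \<le> f (fst w) - f (fst wt) + (w - wt) \<bullet> Gamma Phi DPhi w
        + (1 / (2 * \<gamma>)) * (Hnorm2 ?S (w - wk) - Hnorm2 ?S (w - wk1))"
    using vi m by linarith
qed

end
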